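(* Let $0<q<1$, $\sigma,w\in\mathbb{C}$ with $w\ne0$ and $q^\sigma\notin q^{\mathbb{Z}}$ (complex powers of $w$ taken with one fixed branch of $\log w$). Then \[ \lim_{\substack{|\nu|\to\infty\\ \nu\in-\sigma-\mathbb{N}}}\sin(\pi\nu)\,q^{\nu(\nu+1)/4}\,w^{-\nu}\,\mathfrak{j}_\nu(2w;q) =-\sin(\pi\sigma)\,q^{-\sigma(1-\sigma)/2}\,\frac{(q^\sigma;q)_\infty(q^{1-\sigma};q)_\infty(-q^{1/2}w^2;q)_\infty}{(q;q)_\infty}. \]
   Context: Complex powers of $q$ are $q^s=e^{s\log q}$. $(a;q)_k=\prod_{j=0}^{k-1}(1-aq^j)$, $(a;q)_\infty=\lim_k(a;q)_k$, ${}_0\phi_1(;b;q,z)=\sum_{k\ge0}\frac{q^{k(k-1)}}{(q;q)_k(b;q)_k}z^k$, and \[ \mathfrak{j}_\nu(x;q)=q^{\nu(\nu+1)/4}\frac{(q^{\nu+1};q)_\infty}{(q;q)_\infty}\left(\frac{x}{2}\right)^{\nu}{}_0\phi_1\!\left(;q^{\nu+1};q,-q^{\nu+3/2}\frac{x^2}{4}\right). \] The limit is taken along $\nu=-\sigma-n$, $n\in\mathbb{N}$, $n\to\infty$. *)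

theory Defs
  imports Complex_Main
begin

definition qpow :: "real \<Rightarrow> complex \<Rightarrow> complex" where
  "qpow q s = exp (s * complex_of_real (ln q))"

definition qpoch :: "complex \<Rightarrow> real \<Rightarrow> nat \<Rightarrow> complex" where
  "qpoch a q k = (\<Prod>j<k. 1 - a * complex_of_real q ^ j)"

definition qpoch_inf :: "complex \<Rightarrow> real \<Rightarrow> complex" where
  "qpoch_inf a q = lim (\<lambda>k. qpoch a q k)"

definition phi01 :: "complex \<Rightarrow> real \<Rightarrow> complex \<Rightarrow> complex" where
  "phi01 b q z = (\<Sum>k. complex_of_real (q ^ (k * (k - 1)))
       / (qpoch (complex_of_real q) q k * qpoch b q k) * z ^ k)"

text \<open>The q-Bessel function j_nu(x;q).  The complex power (x/2)^nu is taken as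
  exp(nu * Lx), where Lx is the chosen branch of log(x/2).\<close>
definition jfrak :: "real \<Rightarrow> complex \<Rightarrow> complex \<Rightarrow> complex \<Rightarrow> complex" where
  "jfrak q \<nu> Lx x =
     qpow q (\<nu> * (\<nu> + 1) / 4) * qpoch_inf (qpow q (\<nu> + 1)) q
       / qpoch_inf (complex_of_real q) q
     * exp (\<nu> * Lx)
     * phi01 (qpow q (\<nu> + 1)) q (- qpow q (\<nu> + 3/2) * x ^ 2 / 4)"

end

theory Submission
  imports Defs "HOL-Analysis.Analysis"
begin

lemma qpow_add: "qpow q (a + b) = qpow q a * qpow q b"
  by (simp add: qpow_def distrib_right exp_add)

lemma qpow_nz: "qpow q a \<noteq> 0"
  by (simp add: qpow_def)

lemma qpow_nat: "0 < q \<Longrightarrow> qpow q (of_nat n) = complex_of_real q ^ n"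
  by (simp add: qpow_def exp_of_nat_mult exp_of_real)

lemma qpow_int: "0 < q \<Longrightarrow> qpow q (of_int m) = qpow q (of_int m)" by simp

lemma qpoch_tendsto:
  assumes "0 < q" "q < 1"
  shows "(\<lambda>k. qpoch a q k) \<longlonglongrightarrow> qpoch_inf a q"
proof -
  let ?f = "\<lambda>j. 1 - a * complex_of_real q ^ j"
  have "summable (\<lambda>i. norm (?f i - 1))"
    using assms by (simp add: norm_mult norm_power summable_mult summable_geometric)
  hence "abs_convergent_prod ?f" by (rule summable_imp_abs_convergent_prod)
  hence "convergent_prod ?f" by (rule abs_convergent_prod_imp_convergent_prod)
  hence "(\<lambda>n. \<Prod>i\<le>n. ?f i) \<longlonglongrightarrow> prodinf ?f" by (rule convergent_prod_LIMSEQ)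
  hence "(\<lambda>n. qpoch a q (Suc n)) \<longlonglongrightarrow> prodinf ?f"
    by (simp add: qpoch_def lessThan_Suc_atMost)
  hence L: "(\<lambda>n. qpoch a q n) \<longlonglongrightarrow> prodinf ?f"
    using filterlim_sequentially_Suc by blast
  hence "qpoch_inf a q = prodinf ?f" unfolding qpoch_inf_def by (rule limI)
  with L show ?thesis by simp
qed

lemma qpoch_add: "qpoch a q (n + k) = qpoch a q n * qpoch (a * complex_of_real q ^ n) q k"
  by (induction k) (auto simp: qpoch_def power_add mult_ac)

lemma qpoch_inf_split:
  assumes "0 < q" "q < 1"
  shows "qpoch_inf a q = qpoch a q n * qpoch_inf (a * complex_of_real q ^ n) q"
proof -
  have "(\<lambda>k. qpoch a q (k + n)) \<longlonglongrightarrow> qpoch_inf a q"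
    using qpoch_tendsto[OF assms] by (rule LIMSEQ_ignore_initial_segment)
  moreover have "(\<lambda>k. qpoch a q (k + n)) \<longlonglongrightarrow> qpoch a q n * qpoch_inf (a * complex_of_real q ^ n) q"
  proof -
    have e: "\<And>k. qpoch a q (k + n) = qpoch a q n * qpoch (a * complex_of_real q ^ n) q k"
      by (metis add.commute qpoch_add)
    show ?thesis unfolding e by (intro tendsto_mult tendsto_const qpoch_tendsto assms)
  qed
  ultimately show ?thesis by (rule LIMSEQ_unique)
qed

definition tt :: "real \<Rightarrow> complex \<Rightarrow> nat \<Rightarrow> complex" where
  "tt q x k = (\<Prod>j<k. x * complex_of_real q ^ j / (1 - complex_of_real q ^ Suc j))"

lemma summable_prod_geom:
  fixes q A :: real
  assumes "0 < q" "q < 1" "0 \<le> A"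
  shows "summable (\<lambda>k. \<Prod>j<k. q ^ j * A)"
proof -
  have "(\<lambda>k. q ^ k) \<longlonglongrightarrow> 0" using assms by (intro LIMSEQ_realpow_zero) auto
  hence "(\<lambda>k. q ^ k * A) \<longlonglongrightarrow> 0 * A" by (intro tendsto_mult tendsto_const)
  then obtain N where N: "\<And>k. k \<ge> N \<Longrightarrow> q ^ k * A < 1/2"
    by (metis (no_types, lifting) half_gt_zero_iff lessI mult_zero_left order_tendstoD(2) eventually_sequentially zero_less_one)
  show ?thesis
  proof (rule summable_ratio_test[where c="1/2" and N=N])
    fix k assume "N \<le> k"
    have nn: "0 \<le> (\<Prod>j<k. q ^ j * A)" using assms by (intro prod_nonneg) auto
    have "norm (\<Prod>j<Suc k. q ^ j * A) = (\<Prod>j<k. q ^ j * A) * (q ^ k * A)"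
      using assms nn by simp
    also have "\<dots> \<le> (\<Prod>j<k. q ^ j * A) * (1/2)"
      using N[OF \<open>N \<le> k\<close>] nn by (intro mult_left_mono) auto
    finally show "norm (\<Prod>j<Suc k. q ^ j * A) \<le> 1/2 * norm (\<Prod>j<k. q ^ j * A)"
      using nn by simp
  qed simp
qed

lemma norm_one_minus_qpow:
  assumes "0 < q" "q < 1"
  shows "norm (1 - complex_of_real q ^ Suc j) = 1 - q ^ Suc j"
    "1 - q \<le> 1 - q ^ Suc j"
proof -
  have "q ^ j \<le> 1" using assms by (simp add: power_le_one)
  hence "q ^ Suc j \<le> q" using assms by (simp add: mult_left_le)
  moreover have "q ^ Suc j \<le> 1" using assms by (intro power_le_one) auto
  moreover have "(1 - complex_of_real q ^ Suc j) = complex_of_real (1 - q ^ Suc j)" by simp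
  ultimately show "norm (1 - complex_of_real q ^ Suc j) = 1 - q ^ Suc j"
      "1 - q \<le> 1 - q ^ Suc j" by (simp_all only: norm_of_real)
qed

lemma tt_bound:
  assumes "0 < q" "q < 1" "norm y \<le> B"
  shows "norm (tt q y k) \<le> (\<Prod>j<k. q ^ j * (B / (1 - q)))"
  unfolding tt_def prod_norm[symmetric]
proof (rule prod_mono, safe)
  fix j
  have d: "norm (1 - complex_of_real q ^ Suc j) = 1 - q ^ Suc j" "1 - q \<le> 1 - q ^ Suc j"
    using norm_one_minus_qpow[OF assms(1,2)] by auto
  show "0 \<le> norm (y * complex_of_real q ^ j / (1 - complex_of_real q ^ Suc j))" by simp
  have B0: "0 \<le> B" using assms(3) norm_ge_zero order_trans by blast
  have "norm (y * complex_of_real q ^ j / (1 - complex_of_real q ^ Suc j))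
      = (norm y * q ^ j) / (1 - q ^ Suc j)"
    using assms d by (simp add: norm_mult norm_divide norm_power)
  also have "\<dots> \<le> (B * q ^ j) / (1 - q)"
    using assms d B0 by (intro frac_le mult_right_mono) auto
  finally show "norm (y * complex_of_real q ^ j / (1 - complex_of_real q ^ Suc j)) \<le> q ^ j * (B / (1 - q))"
    by (simp add: mult_ac)
qed

lemma tt_summable:
  assumes "0 < q" "q < 1"
  shows "summable (tt q y)"
proof (rule summable_norm_cancel, rule summable_comparison_test)
  show "\<exists>N. \<forall>n\<ge>N. norm (norm (tt q y n)) \<le> (\<Prod>j<n. q ^ j * (norm y / (1 - q)))"
    using tt_bound[OF assms order_refl] by auto
  show "summable (\<lambda>n. \<Prod>j<n. q ^ j * (norm y / (1 - q)))"
    using assms by (intro summable_prod_geom) auto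
qed

lemma tt_closed: "tt q x k = x ^ k * (\<Prod>j<k. complex_of_real q ^ j / (1 - complex_of_real q ^ Suc j))"
  unfolding tt_def by (induction k) (auto simp: mult_ac)

lemma tt_rec:
  assumes "0 < q" "q < 1"
  shows "tt q x (Suc k) = tt q (complex_of_real q * x) (Suc k) + x * tt q (complex_of_real q * x) k"
proof -
  define C where "C = (\<Prod>j<k. complex_of_real q ^ j / (1 - complex_of_real q ^ Suc j))"
  have nz: "1 - complex_of_real q ^ Suc k \<noteq> 0"
    using norm_one_minus_qpow(1)[OF assms, of k] assms
    by (metis diff_gt_0_iff_gt less_numeral_extra(3) norm_zero power_strict_decreasing_iff power_0 zero_less_Suc)
  have e1: "\<And>y. tt q y (Suc k) = y^Suc k * (C * (complex_of_real q^k/(1 - complex_of_real q ^Suc k)))"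
    by (simp only: tt_closed C_def prod.lessThan_Suc)
  have e2: "\<And>y. tt q y k = y^k * C" by (simp only: tt_closed C_def)
  show ?thesis unfolding e1 e2
    using nz by (simp add: field_simps power_mult_distrib)
qed

lemma tt_functional:
  assumes "0 < q" "q < 1"
  shows "suminf (tt q x) = (1 + x) * suminf (tt q (complex_of_real q * x))"
proof -
  let ?g = "tt q (complex_of_real q * x)"
  have s1: "summable (tt q x)" "summable ?g" using tt_summable[OF assms] by auto
  have s2: "summable (\<lambda>k. ?g (Suc k))" using s1(2) by (simp add: summable_Suc_iff)
  have s3: "summable (\<lambda>k. x * ?g k)" using s1(2) by (rule summable_mult)
  have "suminf (tt q x) = tt q x 0 + (\<Sum>k. tt q x (Suc k))"
    using suminf_split_head[OF s1(1)] by simp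
  also have "(\<Sum>k. tt q x (Suc k)) = (\<Sum>k. ?g (Suc k) + x * ?g k)"
    by (rule arg_cong[where f=suminf], rule ext, rule tt_rec[OF assms])
  also have "\<dots> = (\<Sum>k. ?g (Suc k)) + (\<Sum>k. x * ?g k)"
    using s2 s3 by (rule suminf_add[symmetric])
  also have "(\<Sum>k. ?g (Suc k)) = suminf ?g - ?g 0"
    using suminf_split_head[OF s1(2)] by simp
  also have "(\<Sum>k. x * ?g k) = x * suminf ?g"
    using s1(2) by (rule suminf_mult)
  finally have F: "suminf (tt q x) = tt q x 0 + (suminf ?g - ?g 0 + x * suminf ?g)" .
  have t0: "tt q x 0 = 1" "?g 0 = 1" by (simp_all add: tt_def)
  show ?thesis unfolding F t0 by (simp add: algebra_simps)
qed

lemma tt_iter: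
  assumes "0 < q" "q < 1"
  shows "suminf (tt q x) = qpoch (- x) q N * suminf (tt q (complex_of_real q ^ N * x))"
proof (induction N)
  case 0 then show ?case by (simp add: qpoch_def)
next
  case (Suc N)
  have "suminf (tt q (complex_of_real q ^ N * x))
     = (1 + complex_of_real q ^ N * x) * suminf (tt q (complex_of_real q ^ Suc N * x))"
    using tt_functional[OF assms, of "complex_of_real q ^ N * x"] by (simp add: mult_ac)
  with Suc show ?case by (simp add: qpoch_def mult_ac)
qed

lemma euler:
  assumes "0 < q" "q < 1"
  shows "suminf (tt q x) = qpoch_inf (- x) q"
proof -
  have yl: "(\<lambda>N. complex_of_real q ^ N * x) \<longlonglongrightarrow> 0 * x"
    using assms by (intro tendsto_mult tendsto_const LIMSEQ_power_zero) auto
  have nzd: "\<And>j. 1 - complex_of_real q ^ Suc j \<noteq> 0"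
    using norm_one_minus_qpow[OF assms] assms
    by (metis diff_gt_0_iff_gt less_numeral_extra(3) norm_zero power_strict_decreasing_iff power_0 zero_less_Suc)
  have T: "eventually (\<lambda>N. summable (\<lambda>k. norm (tt q (complex_of_real q ^ N * x) k))) sequentially \<and>
           summable (\<lambda>k. norm (tt q 0 k)) \<and>
           ((\<lambda>N. suminf (\<lambda>k. tt q (complex_of_real q ^ N * x) k)) \<longlongrightarrow> suminf (tt q 0)) sequentially"
  proof (rule tannerys_theorem[where M="\<lambda>k. \<Prod>j<k. q ^ j * (norm x / (1 - q))"])
    fix k
    show "(\<lambda>N. tt q (complex_of_real q ^ N * x) k) \<longlonglongrightarrow> tt q 0 k"
      unfolding tt_def
    proof (intro tendsto_prod tendsto_divide tendsto_mult tendsto_const)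
      fix j show "(\<lambda>N. complex_of_real q ^ N * x) \<longlonglongrightarrow> 0" using yl by simp
      show "1 - complex_of_real q ^ Suc j \<noteq> 0" by (rule nzd)
    qed
  next
    have "norm (complex_of_real q ^ N * x) \<le> norm x" for N
      using assms by (simp add: norm_mult norm_power mult_left_le_one_le power_le_one)
    then show "eventually (\<lambda>(k, N). norm (tt q (complex_of_real q ^ N * x) k) \<le> (\<Prod>j<k. q ^ j * (norm x / (1 - q)))) (at_top \<times>\<^sub>F sequentially)"
      using tt_bound[OF assms] by (intro always_eventually) auto
  next
    show "summable (\<lambda>k. \<Prod>j<k. q ^ j * (norm x / (1 - q)))"
      using assms by (intro summable_prod_geom) auto
  qed simp
  have t0: "tt q 0 = (\<lambda>k. if k = 0 then 1 else 0)"
    by (rule ext) (auto simp: tt_def gr0_conv_Suc)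
  have "suminf (tt q 0) = 1" unfolding t0
    using sums_single[of 0 "\<lambda>_. 1::complex"] by (simp add: sums_iff)
  with T have L1: "(\<lambda>N. suminf (tt q (complex_of_real q ^ N * x))) \<longlonglongrightarrow> 1" by simp
  have "(\<lambda>N. qpoch (- x) q N * suminf (tt q (complex_of_real q ^ N * x))) \<longlonglongrightarrow> qpoch_inf (- x) q * 1"
    by (intro tendsto_mult L1 qpoch_tendsto assms)
  moreover have "(\<lambda>N. qpoch (- x) q N * suminf (tt q (complex_of_real q ^ N * x))) \<longlonglongrightarrow> suminf (tt q x)"
    using tt_iter[OF assms, of x] by simp
  ultimately show ?thesis using LIMSEQ_unique by fastforce
qed

lemma qpow_mult_eq: "a + b = c \<Longrightarrow> qpow q a * qpow q b = qpow q c"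
  using qpow_add[of q a b] by simp

lemma pos_lower_bound:
  fixes f :: "nat \<Rightarrow> real"
  assumes pos: "\<And>m. 0 < f m" and lim: "f \<longlonglongrightarrow> l" and l: "0 < l"
  shows "\<exists>\<delta>>0. \<forall>m. \<delta> \<le> f m"
proof -
  have "eventually (\<lambda>m. l/2 < f m) sequentially"
    using lim l by (intro order_tendstoD(1)) auto
  then obtain M where M: "\<And>m. m \<ge> M \<Longrightarrow> l/2 < f m" by (auto simp: eventually_sequentially)
  define \<delta> where "\<delta> = Min (insert (l/2) (f ` {..<M}))"
  have "\<delta> \<in> insert (l/2) (f ` {..<M})" unfolding \<delta>_def by (intro Min_in) auto
  hence "0 < \<delta>" using pos l by auto
  moreover have "\<delta> \<le> f m" for m
  proof (cases "m < M")
    case True then show ?thesis unfolding \<delta>_def by (intro Min_le) auto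
  next
    case False
    have "\<delta> \<le> l/2" unfolding \<delta>_def by (intro Min_le) auto
    with M[of m] False show ?thesis by auto
  qed
  ultimately show ?thesis by blast
qed

lemma delta_exists:
  fixes q :: real and \<sigma> :: complex
  assumes q: "0 < q" "q < 1"
    and H: "\<forall>m::int. qpow q \<sigma> \<noteq> qpow q (of_int m)"
  shows "\<exists>\<delta>>0. \<forall>n j. \<delta> * q ^ j \<le> norm (qpow q (\<sigma> - 1) * complex_of_real q ^ n - complex_of_real q ^ j)"
proof -
  define d where "d = qpow q (\<sigma> - 1)"
  define Q where "Q = complex_of_real q"
  have d0: "d \<noteq> 0" unfolding d_def by (rule qpow_nz)
  have Qn: "norm (Q ^ m) = q ^ m" for m using q by (simp add: Q_def norm_power)
  have Qlim: "(\<lambda>m. Q ^ m) \<longlonglongrightarrow> 0" using q by (intro LIMSEQ_power_zero) (simp add: Q_def)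
  have "\<exists>\<delta>>0. \<forall>m. \<delta> \<le> norm (d * Q ^ m - 1)"
  proof (rule pos_lower_bound)
    fix m
    show "0 < norm (d * Q ^ m - 1)"
    proof (rule ccontr)
      assume "\<not> 0 < norm (d * Q ^ m - 1)"
      hence e: "d * Q ^ m = 1" by simp
      have "qpow q \<sigma> = qpow q (of_int (1 - int m)) * (d * Q ^ m)"
        unfolding d_def Q_def qpow_nat[OF q(1), symmetric]
        by (simp add: qpow_mult_eq)
      hence "qpow q \<sigma> = qpow q (of_int (1 - int m))" using e by simp
      with H show False by blast
    qed
    show "(\<lambda>m. norm (d * Q ^ m - 1)) \<longlonglongrightarrow> norm (d * 0 - 1)"
      by (intro tendsto_norm tendsto_diff tendsto_mult tendsto_const Qlim)
  qed simp
  then obtain \<delta>1 where d1: "\<delta>1 > 0" "\<And>m. \<delta>1 \<le> norm (d * Q ^ m - 1)" by blast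
  have "\<exists>\<delta>>0. \<forall>m. \<delta> \<le> norm (d - Q ^ Suc m)"
  proof (rule pos_lower_bound)
    fix m
    show "0 < norm (d - Q ^ Suc m)"
    proof (rule ccontr)
      assume "\<not> 0 < norm (d - Q ^ Suc m)"
      hence e: "d = Q ^ Suc m" by simp
      have "qpow q \<sigma> = d * qpow q 1"
        unfolding d_def by (simp add: qpow_mult_eq)
      also have "\<dots> = Q ^ Suc m * Q" using e qpow_nat[OF q(1), of 1] by (simp add: Q_def)
      also have "\<dots> = qpow q (of_nat (Suc m + 1))" by (simp only: qpow_nat[OF q(1)] Q_def) simp
      also have "\<dots> = qpow q (of_int (int m + 2))" by (simp add: add.commute)
      finally show False using H by blast
    qed
    have "(\<lambda>m. Q ^ Suc m) \<longlonglongrightarrow> 0" using Qlim by (rule LIMSEQ_Suc)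
    thus "(\<lambda>m. norm (d - Q ^ Suc m)) \<longlonglongrightarrow> norm (d - 0)"
      by (intro tendsto_norm tendsto_diff tendsto_const)
  qed (use d0 in simp)
  then obtain \<delta>2 where d2: "\<delta>2 > 0" "\<And>m. \<delta>2 \<le> norm (d - Q ^ Suc m)" by blast
  have "min \<delta>1 \<delta>2 * q ^ j \<le> norm (d * Q ^ n - Q ^ j)" for n j
  proof (cases "j \<le> n")
    case True
    then obtain m where n: "n = j + m" using le_Suc_ex by blast
    have "norm (d * Q ^ n - Q ^ j) = norm (Q ^ j * (d * Q ^ m - 1))"
      unfolding n by (simp add: power_add algebra_simps)
    also have "\<dots> = q ^ j * norm (d * Q ^ m - 1)" by (simp only: norm_mult Qn)
    finally have "norm (d * Q ^ n - Q ^ j) = q ^ j * norm (d * Q ^ m - 1)" .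
    moreover have "min \<delta>1 \<delta>2 * q ^ j \<le> q ^ j * norm (d * Q ^ m - 1)"
      using d1(2)[of m] q by (simp add: mult.commute mult_left_mono)
    ultimately show ?thesis by simp
  next
    case False
    then obtain m where j: "j = n + Suc m" by (metis add_Suc_right less_imp_Suc_add not_le)
    have "norm (d * Q ^ n - Q ^ j) = norm (Q ^ n * (d - Q ^ Suc m))"
      unfolding j by (simp only: power_add algebra_simps)
    also have "\<dots> = q ^ n * norm (d - Q ^ Suc m)" by (simp only: norm_mult Qn)
    finally have "norm (d * Q ^ n - Q ^ j) = q ^ n * norm (d - Q ^ Suc m)" .
    moreover have "min \<delta>1 \<delta>2 * q ^ j \<le> \<delta>2 * q ^ n"
      using q d1 d2 False by (intro mult_mono power_decreasing) auto
    moreover have "\<delta>2 * q ^ n \<le> q ^ n * norm (d - Q ^ Suc m)"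
      using d2(2)[of m] q by (simp add: mult.commute mult_left_mono)
    ultimately show ?thesis by simp
  qed
  thus ?thesis using d1 d2 unfolding d_def Q_def by (intro exI[of _ "min \<delta>1 \<delta>2"]) auto
qed

lemma nat_exp_id: "k * (k - 1) + 2 * k = Suc k * (Suc k - 1)"
  by (cases k) auto

lemma qprod_pow: "complex_of_real (q ^ (k * (k - 1))) = (\<Prod>j<k. complex_of_real q ^ (2 * j))"
proof (induction k)
  case 0 then show ?case by simp
next
  case (Suc k)
  have "complex_of_real (q ^ (Suc k * (Suc k - 1))) = complex_of_real (q ^ (k * (k - 1))) * complex_of_real q ^ (2 * k)"
    by (simp only: nat_exp_id[symmetric] power_add of_real_mult of_real_power)
  then show ?case using Suc by simp
qed

lemma sin_shift:
  "sin (complex_of_real pi * (- \<sigma> - of_nat n)) = - ((-1) ^ n * sin (complex_of_real pi * \<sigma>))"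
proof (induction n)
  case 0 then show ?case by simp
next
  case (Suc n)
  have "complex_of_real pi * (- \<sigma> - of_nat (Suc n)) = complex_of_real pi * (- \<sigma> - of_nat n) - complex_of_real pi"
    by (simp add: algebra_simps)
  then show ?case using Suc by (simp add: sin_diff)
qed

lemma qpoch_b:
  fixes q :: real and \<sigma> :: complex
  assumes q: "0 < q"
  shows "qpoch (qpow q (- \<sigma> - of_nat n + 1)) q n
       = (-1) ^ n * qpow q (of_nat n * (1 - \<sigma>) - of_nat n * (of_nat n + 1) / 2) * qpoch (qpow q \<sigma>) q n"
proof (induction n)
  case 0 then show ?case by (simp add: qpoch_def qpow_def)
next
  case (Suc n)
  define Q where "Q = complex_of_real q"
  define b' where "b' = qpow q (- \<sigma> - of_nat (Suc n) + 1)"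
  define b where "b = qpow q (- \<sigma> - of_nat n + 1)"
  define s where "s = qpow q \<sigma>"
  define E where "E = (\<lambda>n::nat. of_nat n * (1 - \<sigma>) - of_nat n * (of_nat n + 1) / (2::complex))"
  have Q1: "Q = qpow q 1" using qpow_nat[OF q, of 1] by (simp add: Q_def)
  have b'Q: "b' * Q = b" unfolding Q1 b'_def b_def by (rule qpow_mult_eq) simp
  have e1: "qpoch b' q (Suc n) = (1 - b') * qpoch b q n"
    unfolding qpoch_def prod.lessThan_Suc_shift
    by (simp add: Q_def[symmetric] b'Q[symmetric] mult.assoc)
  have e2: "qpoch s q (Suc n) = qpoch s q n * (1 - s * Q ^ n)"
    by (simp add: qpoch_def Q_def)
  have e3: "qpow q (E (Suc n)) = qpow q (E n) * b'"
    unfolding b'_def by (rule qpow_mult_eq[symmetric]) (simp add: E_def field_simps)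
  have e4: "b' * s * Q ^ n = 1"
    unfolding b'_def s_def Q_def qpow_nat[OF q, symmetric]
    by (simp only: qpow_add[symmetric]) (simp add: qpow_def)
  have e5: "(1 - s * Q ^ n) * b' = b' - 1" using e4 by (simp add: algebra_simps)
  have IH: "qpoch b q n = (-1) ^ n * qpow q (E n) * qpoch s q n"
    using Suc by (simp add: b_def E_def s_def)
  have "qpoch b' q (Suc n) = (-1) ^ Suc n * qpow q (E (Suc n)) * qpoch s q (Suc n)"
  proof -
    have "(-1) ^ Suc n * qpow q (E (Suc n)) * qpoch s q (Suc n)
        = (-1) ^ Suc n * qpow q (E n) * qpoch s q n * ((1 - s * Q ^ n) * b')"
      unfolding e2 e3 by (simp add: mult_ac)
    also have "\<dots> = (1 - b') * ((-1) ^ n * qpow q (E n) * qpoch s q n)"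
      unfolding e5 by (simp add: algebra_simps)
    finally show ?thesis unfolding e1 IH by simp
  qed
  then show ?case by (simp only: b'_def E_def s_def)
qed

lemma phi_limit:
  fixes q :: real and \<sigma> w :: complex
  assumes q: "0 < q" "q < 1"
    and H: "\<forall>m::int. qpow q \<sigma> \<noteq> qpow q (of_int m)"
  shows "(\<lambda>n. phi01 (qpow q ((- \<sigma> - of_nat n) + 1)) q
                (- qpow q ((- \<sigma> - of_nat n) + 3/2) * (2 * w) ^ 2 / 4))
         \<longlonglongrightarrow> qpoch_inf (- (qpow q (1/2) * w ^ 2)) q"
proof -
  define Q where "Q = complex_of_real q"
  define r where "r = qpow q (1/2) * w ^ 2"
  define d where "d = qpow q (\<sigma> - 1)"
  define b where "b = (\<lambda>n::nat. qpow q ((- \<sigma> - of_nat n) + 1))"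
  define z where "z = (\<lambda>n::nat. - qpow q ((- \<sigma> - of_nat n) + 3/2) * (2 * w) ^ 2 / 4)"
  define e where "e = (\<lambda>n::nat. d * Q ^ n)"
  define h where "h = (\<lambda>n j. Q ^ (2 * j) / (1 - Q ^ Suc j) * (- r / (e n - Q ^ j)))"
  obtain \<delta> where \<delta>: "\<delta> > 0" "\<And>n j. \<delta> * q ^ j \<le> norm (e n - Q ^ j)"
    using delta_exists[OF q H] unfolding e_def d_def Q_def by blast
  have Q0: "Q \<noteq> 0" using q by (simp add: Q_def)
  have d0: "d \<noteq> 0" unfolding d_def by (rule qpow_nz)
  have e0: "e n \<noteq> 0" for n using Q0 d0 by (simp add: e_def)
  have bz: "z n = - b n * r" for n
  proof -
    have "qpow q ((- \<sigma> - of_nat n) + 3/2) = b n * qpow q (1/2)"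
      unfolding b_def by (rule qpow_mult_eq[symmetric]) simp
    thus ?thesis by (simp add: z_def r_def power_mult_distrib)
  qed
  have be: "b n * e n = 1" for n
  proof -
    have "b n * e n = qpow q ((- \<sigma> - of_nat n) + 1) * qpow q (\<sigma> - 1) * qpow q (of_nat n)"
      by (simp add: b_def e_def d_def Q_def qpow_nat[OF q(1)] mult.assoc)
    also have "\<dots> = 1" by (simp only: qpow_add[symmetric]) (simp add: qpow_def)
    finally show ?thesis .
  qed
  have term_eq: "complex_of_real (q ^ (k * (k - 1))) / (qpoch (complex_of_real q) q k * qpoch (b n) q k) * z n ^ k
        = (\<Prod>j<k. h n j)" for n k
  proof -
    have c2: "qpoch (complex_of_real q) q k = (\<Prod>j<k. 1 - Q ^ Suc j)"
      by (simp add: qpoch_def Q_def)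
    have c3: "qpoch (b n) q k = (\<Prod>j<k. 1 - b n * Q ^ j)" by (simp add: qpoch_def Q_def)
    have c4: "z n / (1 - b n * Q ^ j) = - r / (e n - Q ^ j)" for j
    proof -
      have "z n / (1 - b n * Q ^ j) = (z n * e n) / ((1 - b n * Q ^ j) * e n)"
        using e0 by simp
      also have "(1 - b n * Q ^ j) * e n = e n - Q ^ j"
        using be[of n] by (simp add: algebra_simps)
      also have "z n * e n = - r" unfolding bz using be[of n] by (simp add: algebra_simps)
      finally show ?thesis .
    qed
    have "(\<Prod>j<k. h n j) = (\<Prod>j<k. Q ^ (2 * j) / (1 - Q ^ Suc j) * (z n / (1 - b n * Q ^ j)))"
      unfolding h_def c4 ..
    also have "\<dots> = (\<Prod>j<k. Q ^ (2 * j)) / (\<Prod>j<k. 1 - Q ^ Suc j) * ((\<Prod>j<k. z n) / (\<Prod>j<k. 1 - b n * Q ^ j))"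
      by (simp only: prod.distrib prod_dividef)
    also have "\<dots> = complex_of_real (q ^ (k * (k - 1))) / (qpoch (complex_of_real q) q k * qpoch (b n) q k) * z n ^ k"
      unfolding c2 c3 qprod_pow Q_def by simp
    finally show ?thesis ..
  qed
  have phi_eq: "phi01 (b n) q (z n) = (\<Sum>k. \<Prod>j<k. h n j)" for n
    unfolding phi01_def term_eq ..
  define A where "A = norm r / (\<delta> * (1 - q))"
  have T: "eventually (\<lambda>n. summable (\<lambda>k. norm (\<Prod>j<k. h n j))) sequentially \<and>
           summable (\<lambda>k. norm (tt q r k)) \<and>
           ((\<lambda>n. suminf (\<lambda>k. \<Prod>j<k. h n j)) \<longlongrightarrow> suminf (tt q r)) sequentially"
  proof (rule tannerys_theorem[where M="\<lambda>k. \<Prod>j<k. q ^ j * A"])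
    fix k
    have elim: "e \<longlonglongrightarrow> d * 0" unfolding e_def
      using q by (intro tendsto_mult tendsto_const LIMSEQ_power_zero) (simp add: Q_def)
    have "(\<lambda>n. \<Prod>j<k. h n j) \<longlonglongrightarrow> (\<Prod>j<k. Q ^ (2 * j) / (1 - Q ^ Suc j) * (- r / (d * 0 - Q ^ j)))"
      unfolding h_def
      by (intro tendsto_prod tendsto_mult tendsto_const tendsto_divide tendsto_diff elim) (use Q0 in simp)
    also have "(\<Prod>j<k. Q ^ (2 * j) / (1 - Q ^ Suc j) * (- r / (d * 0 - Q ^ j))) = tt q r k"
      unfolding tt_def Q_def[symmetric]
    proof (rule prod.cong[OF refl])
      fix j
      have "Q ^ j \<noteq> 0" using Q0 by simp
      then show "Q ^ (2 * j) / (1 - Q ^ Suc j) * (- r / (d * 0 - Q ^ j)) = r * Q ^ j / (1 - Q ^ Suc j)"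
        by (simp add: power_mult power2_eq_square field_simps)
    qed
    finally show "(\<lambda>n. \<Prod>j<k. h n j) \<longlonglongrightarrow> tt q r k" .
  next
    have hb: "norm (h n j) \<le> q ^ j * A" for n j
    proof -
      have d1: "norm (1 - Q ^ Suc j) = 1 - q ^ Suc j" "1 - q \<le> 1 - q ^ Suc j"
        using norm_one_minus_qpow[OF q] by (auto simp: Q_def)
      have pj: "0 < q ^ j" using q by simp
      have "norm (h n j) = q ^ (2 * j) / (1 - q ^ Suc j) * (norm r / norm (e n - Q ^ j))"
        unfolding h_def using d1 q by (simp add: norm_mult norm_divide norm_power Q_def)
      also have "\<dots> \<le> q ^ (2 * j) / (1 - q) * (norm r / (\<delta> * q ^ j))"
        using d1 q \<delta> pj by (intro mult_mono frac_le divide_nonneg_nonneg) auto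
      also have "\<dots> = q ^ j * A"
        using pj \<delta> q by (simp add: A_def power_mult power2_eq_square field_simps)
      finally show ?thesis .
    qed
    have A0: "0 \<le> A" using \<delta> q by (simp add: A_def)
    show "eventually (\<lambda>(k, n). norm (\<Prod>j<k. h n j) \<le> (\<Prod>j<k. q ^ j * A)) (at_top \<times>\<^sub>F sequentially)"
      by (intro always_eventually allI, clarify, unfold prod_norm[symmetric],
          intro prod_mono conjI norm_ge_zero hb)
  next
    show "summable (\<lambda>k. \<Prod>j<k. q ^ j * A)"
      using q \<delta> by (intro summable_prod_geom) (auto simp: A_def)
  qed simp
  hence "(\<lambda>n. phi01 (b n) q (z n)) \<longlonglongrightarrow> suminf (tt q r)"
    unfolding phi_eq by simp
  thus ?thesis unfolding euler[OF q] r_def b_def z_def .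
qed

theorem mainTheorem9:
  fixes q :: real and \<sigma> w L :: complex
  assumes "0 < q" "q < 1"
    and "w \<noteq> 0"
    and "exp L = w"
    and "\<forall>m::int. qpow q \<sigma> \<noteq> qpow q (of_int m)"
  shows "(\<lambda>n::nat. let \<nu> = - \<sigma> - of_nat n in
            sin (complex_of_real pi * \<nu>) * qpow q (\<nu> * (\<nu> + 1) / 4)
            * exp (- \<nu> * L) * jfrak q \<nu> L (2 * w))
         \<longlonglongrightarrow>
         - sin (complex_of_real pi * \<sigma>) * qpow q (- \<sigma> * (1 - \<sigma>) / 2)
           * (qpoch_inf (qpow q \<sigma>) q * qpoch_inf (qpow q (1 - \<sigma>)) q
              * qpoch_inf (- qpow q (1/2) * w ^ 2) q)
           / qpoch_inf (complex_of_real q) q"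
proof -
  note q = assms(1,2)
  define K where "K = - sin (complex_of_real pi * \<sigma>) * qpow q (- \<sigma> * (1 - \<sigma>) / 2)
     * qpoch_inf (qpow q (1 - \<sigma>)) q / qpoch_inf (complex_of_real q) q"
  define phi where "phi = (\<lambda>n::nat. phi01 (qpow q ((- \<sigma> - of_nat n) + 1)) q
                (- qpow q ((- \<sigma> - of_nat n) + 3/2) * (2 * w) ^ 2 / 4))"
  have eq: "(let \<nu> = - \<sigma> - of_nat n in
            sin (complex_of_real pi * \<nu>) * qpow q (\<nu> * (\<nu> + 1) / 4)
            * exp (- \<nu> * L) * jfrak q \<nu> L (2 * w)) = K * qpoch (qpow q \<sigma>) q n * phi n" for n
  proof -
    define \<nu> where "\<nu> = - \<sigma> - of_nat (n::nat)"
    define E where "E = of_nat n * (1 - \<sigma>) - of_nat n * (of_nat n + 1) / (2::complex)"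
    define X where "X = \<nu> * (\<nu> + 1) / 4"
    define P where "P = qpoch (qpow q \<sigma>) q n"
    define I1 where "I1 = qpoch_inf (qpow q (1 - \<sigma>)) q"
    define Qi where "Qi = qpoch_inf (complex_of_real q) q"
    have phin: "phi n = phi01 (qpow q (\<nu> + 1)) q (- qpow q (\<nu> + 3/2) * (2 * w) ^ 2 / 4)"
      unfolding phi_def \<nu>_def ..
    have s1: "sin (complex_of_real pi * \<nu>) = - ((-1) ^ n * sin (complex_of_real pi * \<sigma>))"
      unfolding \<nu>_def by (rule sin_shift)
    have bQ: "qpow q (\<nu> + 1) * complex_of_real q ^ n = qpow q (1 - \<sigma>)"
      unfolding qpow_nat[OF q(1), symmetric] \<nu>_def by (rule qpow_mult_eq) simp
    have s2: "qpoch_inf (qpow q (\<nu> + 1)) q = qpoch (qpow q (\<nu> + 1)) q n * I1"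
      using qpoch_inf_split[OF q, of "qpow q (\<nu> + 1)" n] unfolding bQ I1_def .
    have s3: "qpoch (qpow q (\<nu> + 1)) q n = (-1) ^ n * qpow q E * P"
      unfolding \<nu>_def E_def P_def by (rule qpoch_b[OF q(1)])
    have s4: "qpow q X * qpow q X * qpow q E = qpow q (- \<sigma> * (1 - \<sigma>) / 2)"
    proof -
      have "X + X + E = - \<sigma> * (1 - \<sigma>) / 2"
        unfolding X_def E_def \<nu>_def by (simp add: field_simps)
      thus ?thesis by (simp add: qpow_add[symmetric])
    qed
    have s5: "exp (- \<nu> * L) * exp (\<nu> * L) = 1" by (simp add: exp_add[symmetric])
    have s6: "(-1::complex) ^ n * (-1) ^ n = 1" by (simp add: power_mult_distrib[symmetric])
    have "(let \<nu> = - \<sigma> - of_nat n in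
            sin (complex_of_real pi * \<nu>) * qpow q (\<nu> * (\<nu> + 1) / 4)
            * exp (- \<nu> * L) * jfrak q \<nu> L (2 * w))
        = sin (complex_of_real pi * \<nu>) * qpow q X * exp (- \<nu> * L)
          * (qpow q X * qpoch_inf (qpow q (\<nu> + 1)) q / Qi * exp (\<nu> * L) * phi n)"
      unfolding Let_def \<nu>_def[symmetric] jfrak_def X_def[symmetric] Qi_def[symmetric] phin[symmetric] ..
    also have "\<dots> = - sin (complex_of_real pi * \<sigma>) * ((-1) ^ n * (-1) ^ n) * (qpow q X * qpow q X * qpow q E)
          * (exp (- \<nu> * L) * exp (\<nu> * L)) * I1 / Qi * P * phi n"
      unfolding s1 s2 s3 divide_inverse by algebra
    also have "\<dots> = K * P * phi n"
      unfolding s4 s5 s6 K_def I1_def Qi_def divide_inverse by algebra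
    finally show ?thesis unfolding P_def .
  qed
  have "(\<lambda>n. K * qpoch (qpow q \<sigma>) q n * phi n)
        \<longlonglongrightarrow> K * qpoch_inf (qpow q \<sigma>) q * qpoch_inf (- (qpow q (1/2) * w ^ 2)) q"
    unfolding phi_def
    by (rule tendsto_mult[OF tendsto_mult[OF tendsto_const qpoch_tendsto[OF q]] phi_limit[OF q assms(5)]])
  also have "K * qpoch_inf (qpow q \<sigma>) q * qpoch_inf (- (qpow q (1/2) * w ^ 2)) q
     = - sin (complex_of_real pi * \<sigma>) * qpow q (- \<sigma> * (1 - \<sigma>) / 2)
           * (qpoch_inf (qpow q \<sigma>) q * qpoch_inf (qpow q (1 - \<sigma>)) q
              * qpoch_inf (- qpow q (1/2) * w ^ 2) q)
           / qpoch_inf (complex_of_real q) q"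
    unfolding K_def divide_inverse minus_mult_left[symmetric] by algebra
  finally show ?thesis unfolding eq .
qed

end
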